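(* Let $\mathcal V$ be an operator space and $\mathcal D$ a bounded noncommutative domain in $\mathcal V_{\rm nc}$, and let $n\in\mathbb N$. On any subset $A\subseteq\mathcal D_n$ which is at positive norm-distance from $\mathcal V^{n\times n}\setminus\mathcal D_n$, the topologies induced by $\tilde d_{\mathcal D}$ and by the norm of $\mathcal V^{n\times n}$ coincide.
   Context: A noncommutative domain is a family of open sets $\mathcal D_n\subseteq\mathcal V^{n\times n}$ closed under direct sums $\begin{bmatrix}a&0\\0&c\end{bmatrix}$; bounded means there is $M<\infty$ with $\|x\|\le M$ for all $x\in\mathcal D_k$, all $k$. For $a\in\mathcal D_n,c\in\mathcal D_m,b\in\mathcal V^{n\times m}$, $\delta_{\mathcal D}(a,c)(b)=\big[\sup\{t\in[0,+\infty]\colon\begin{bmatrix}a&sb\\0&c\end{bmatrix}\in\mathcal D_{n+m}\ \forall s\in[0,t]\}\big]^{-1}$ ($1/0=+\infty,1/\infty=0$), $\tilde\delta_{\mathcal D}(a,c)=\delta_{\mathcal D}(a,c)(a-c)$, and $\tilde d_{\mathcal D}(a,c)=\inf\{\sum_{j=1}^N\tilde\delta_{\mathcal D}(a_{j-1},a_j)\colon N\in\mathbb N,\ a_0=a,a_N=c,\ a_j\in\mathcal D_n\}$. *)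

theory Defs
  imports Complex_Main "HOL-Library.Extended_Real"
begin

text \<open>Matrices over a vector space V are modelled as functions nat => nat => V;
  an n x m matrix is one whose entries outside {0..<n} x {0..<m} vanish.\<close>

type_synonym 'v mat = "nat \<Rightarrow> nat \<Rightarrow> 'v"

definition is_mat :: "nat \<Rightarrow> nat \<Rightarrow> ('v::zero) mat \<Rightarrow> bool" where
  "is_mat n m x \<longleftrightarrow> (\<forall>i j. (n \<le> i \<or> m \<le> j) \<longrightarrow> x i j = 0)"

definition mat_diff :: "('v::ab_group_add) mat \<Rightarrow> 'v mat \<Rightarrow> 'v mat" where
  "mat_diff x y = (\<lambda>i j. x i j - y i j)"

definition mat_scale :: "(complex \<Rightarrow> 'v \<Rightarrow> 'v) \<Rightarrow> complex \<Rightarrow> 'v mat \<Rightarrow> 'v mat" where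
  "mat_scale sc c x = (\<lambda>i j. sc c (x i j))"

definition blk :: "nat \<Rightarrow> nat \<Rightarrow> ('v::zero) mat \<Rightarrow> 'v mat \<Rightarrow> 'v mat \<Rightarrow> 'v mat" where
  "blk n m a b c = (\<lambda>i j. if i < n then (if j < n then a i j else b i (j - n))
                          else (if j < n then 0 else c (i - n) (j - n)))"

definition dsum :: "nat \<Rightarrow> nat \<Rightarrow> ('v::zero) mat \<Rightarrow> 'v mat \<Rightarrow> 'v mat" where
  "dsum n m a c = blk n m a (\<lambda>_ _. 0) c"

definition cmat_norm :: "nat \<Rightarrow> nat \<Rightarrow> complex mat \<Rightarrow> real" where
  "cmat_norm m n \<alpha> = Sup {sqrt (\<Sum>i<m. (cmod (\<Sum>k<n. \<alpha> i k * \<xi> k))\<^sup>2) | \<xi>.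
                              (\<Sum>k<n. (cmod (\<xi> k))\<^sup>2) \<le> 1}"

definition mat_sandwich :: "(complex \<Rightarrow> 'v \<Rightarrow> 'v) \<Rightarrow> nat \<Rightarrow> nat \<Rightarrow> complex mat \<Rightarrow> ('v::ab_group_add) mat
                            \<Rightarrow> complex mat \<Rightarrow> 'v mat" where
  "mat_sandwich sc m n \<alpha> x \<beta> = (\<lambda>i j. if i < m \<and> j < m
      then (\<Sum>k<n. \<Sum>l<n. sc (\<alpha> i k * \<beta> l j) (x k l)) else 0)"

text \<open>Abstract operator space (Ruan's axioms): a complex vector space V (scalar
  multiplication sc) with a norm nrm n on each V^{n x n}, n >= 1, such that
  ||x (+) y|| = max ||x|| ||y|| and ||alpha x beta|| <= ||alpha|| ||x|| ||beta||.\<close>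
definition operator_space :: "(complex \<Rightarrow> ('v::ab_group_add) \<Rightarrow> 'v) \<Rightarrow> (nat \<Rightarrow> 'v mat \<Rightarrow> real) \<Rightarrow> bool" where
  "operator_space sc nrm \<longleftrightarrow>
     vector_space sc \<and>
     (\<forall>n\<ge>1. \<forall>x. is_mat n n x \<longrightarrow> 0 \<le> nrm n x \<and> (nrm n x = 0 \<longleftrightarrow> x = (\<lambda>_ _. 0))) \<and>
     (\<forall>n\<ge>1. \<forall>x y. is_mat n n x \<longrightarrow> is_mat n n y \<longrightarrow>
         nrm n (\<lambda>i j. x i j + y i j) \<le> nrm n x + nrm n y) \<and>
     (\<forall>n\<ge>1. \<forall>c x. is_mat n n x \<longrightarrow> nrm n (mat_scale sc c x) = cmod c * nrm n x) \<and>
     (\<forall>n\<ge>1. \<forall>m\<ge>1. \<forall>x y. is_mat n n x \<longrightarrow> is_mat m m y \<longrightarrow>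
         nrm (n + m) (dsum n m x y) = max (nrm n x) (nrm m y)) \<and>
     (\<forall>n\<ge>1. \<forall>m\<ge>1. \<forall>\<alpha> x \<beta>. is_mat m n \<alpha> \<longrightarrow> is_mat n n x \<longrightarrow> is_mat n m \<beta> \<longrightarrow>
         nrm m (mat_sandwich sc m n \<alpha> x \<beta>) \<le> cmat_norm m n \<alpha> * nrm n x * cmat_norm n m \<beta>)"

definition nc_domain :: "(nat \<Rightarrow> ('v::ab_group_add) mat \<Rightarrow> real) \<Rightarrow> (nat \<Rightarrow> 'v mat set) \<Rightarrow> bool" where
  "nc_domain nrm D \<longleftrightarrow>
     (\<forall>n. D n \<subseteq> {x. is_mat n n x}) \<and>
     (\<forall>n\<ge>1. \<forall>x\<in>D n. \<exists>e>0. \<forall>y. is_mat n n y \<and> nrm n (mat_diff y x) < e \<longrightarrow> y \<in> D n) \<and>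
     (\<forall>n\<ge>1. \<forall>m\<ge>1. \<forall>a\<in>D n. \<forall>c\<in>D m. dsum n m a c \<in> D (n + m))"

definition bounded_nc :: "(nat \<Rightarrow> 'v mat \<Rightarrow> real) \<Rightarrow> (nat \<Rightarrow> 'v mat set) \<Rightarrow> bool" where
  "bounded_nc nrm D \<longleftrightarrow> (\<exists>M. \<forall>k\<ge>1. \<forall>x\<in>D k. nrm k x \<le> M)"

text \<open>delta_D(a,c)(b), with 1/0 = +infinity and 1/infinity = 0 (ereal inverse).\<close>
definition nc_delta :: "(complex \<Rightarrow> 'v \<Rightarrow> 'v) \<Rightarrow> (nat \<Rightarrow> ('v::ab_group_add) mat set) \<Rightarrow> nat \<Rightarrow> nat
                        \<Rightarrow> 'v mat \<Rightarrow> 'v mat \<Rightarrow> 'v mat \<Rightarrow> ereal" where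
  "nc_delta sc D n m a c b = inverse (Sup {t::ereal. 0 \<le> t \<and>
      (\<forall>s::real. 0 \<le> s \<and> ereal s \<le> t \<longrightarrow>
          blk n m a (mat_scale sc (complex_of_real s) b) c \<in> D (n + m))})"

definition nc_delta_tilde :: "(complex \<Rightarrow> 'v \<Rightarrow> 'v) \<Rightarrow> (nat \<Rightarrow> ('v::ab_group_add) mat set) \<Rightarrow> nat
                        \<Rightarrow> 'v mat \<Rightarrow> 'v mat \<Rightarrow> ereal" where
  "nc_delta_tilde sc D n a c = nc_delta sc D n n a c (mat_diff a c)"

definition nc_dist_tilde :: "(complex \<Rightarrow> 'v \<Rightarrow> 'v) \<Rightarrow> (nat \<Rightarrow> ('v::ab_group_add) mat set) \<Rightarrow> nat
                        \<Rightarrow> 'v mat \<Rightarrow> 'v mat \<Rightarrow> ereal" where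
  "nc_dist_tilde sc D n a c = Inf {(\<Sum>j\<in>{1..N}. nc_delta_tilde sc D n (p (j - 1)) (p j)) | (N::nat) p.
      p 0 = a \<and> p N = c \<and> (\<forall>j\<le>N. p j \<in> D n)}"

definition dist_open :: "'a set \<Rightarrow> ('a \<Rightarrow> 'a \<Rightarrow> ereal) \<Rightarrow> 'a set \<Rightarrow> bool" where
  "dist_open A d U \<longleftrightarrow> U \<subseteq> A \<and> (\<forall>a\<in>U. \<exists>e::real>0. \<forall>b\<in>A. d a b < ereal e \<longrightarrow> b \<in> U)"

end

theory Submission
  imports Defs
begin


lemma os_vs: "operator_space sc nrm \<Longrightarrow> vector_space sc"
  unfolding operator_space_def by blast

lemma sc_simps:
  assumes "operator_space sc nrm"
  shows "sc 0 v = 0" "sc 1 v = v" "sc c 0 = 0" "sc (-1) v = - v"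
proof -
  interpret vector_space sc using os_vs[OF assms] .
  show "sc 0 v = 0" "sc 1 v = v" "sc c 0 = 0" "sc (-1) v = - v" by (simp_all add: scale_minus_left)
qed

lemma sc_if: "operator_space sc nrm \<Longrightarrow> sc (if P then 1 else 0) v = (if P then v else 0)"
  using sc_simps by auto

lemma nrm_nonneg: "operator_space sc nrm \<Longrightarrow> n \<ge> 1 \<Longrightarrow> is_mat n n x \<Longrightarrow> 0 \<le> nrm n x"
  unfolding operator_space_def by blast
lemma nrm_zero_iff: "operator_space sc nrm \<Longrightarrow> n \<ge> 1 \<Longrightarrow> is_mat n n x \<Longrightarrow> nrm n x = 0 \<longleftrightarrow> x = (\<lambda>_ _. 0)"
  unfolding operator_space_def by blast
lemma nrm_tri: "operator_space sc nrm \<Longrightarrow> n \<ge> 1 \<Longrightarrow> is_mat n n x \<Longrightarrow> is_mat n n y \<Longrightarrow>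
   nrm n (\<lambda>i j. x i j + y i j) \<le> nrm n x + nrm n y"
  unfolding operator_space_def by blast
lemma nrm_scale: "operator_space sc nrm \<Longrightarrow> n \<ge> 1 \<Longrightarrow> is_mat n n x \<Longrightarrow>
   nrm n (mat_scale sc c x) = cmod c * nrm n x"
  unfolding operator_space_def by blast
lemma nrm_dsum: "operator_space sc nrm \<Longrightarrow> n \<ge> 1 \<Longrightarrow> m \<ge> 1 \<Longrightarrow> is_mat n n x \<Longrightarrow> is_mat m m y \<Longrightarrow>
   nrm (n + m) (dsum n m x y) = max (nrm n x) (nrm m y)"
  unfolding operator_space_def by blast
lemma nrm_sandwich: "operator_space sc nrm \<Longrightarrow> n \<ge> 1 \<Longrightarrow> m \<ge> 1 \<Longrightarrow> is_mat m n \<alpha> \<Longrightarrow> is_mat n n x \<Longrightarrow> is_mat n m \<beta> \<Longrightarrow>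
         nrm m (mat_sandwich sc m n \<alpha> x \<beta>) \<le> cmat_norm m n \<alpha> * nrm n x * cmat_norm n m \<beta>"
  unfolding operator_space_def by blast

lemma nrm_0: "operator_space sc nrm \<Longrightarrow> n \<ge> 1 \<Longrightarrow> nrm n (\<lambda>_ _. 0) = 0"
  using nrm_zero_iff[of sc nrm n "\<lambda>_ _. 0"] by (simp add: is_mat_def)

lemma is_mat_diff: "is_mat n m x \<Longrightarrow> is_mat n m y \<Longrightarrow> is_mat n m (mat_diff x y)"
  unfolding is_mat_def mat_diff_def by auto
lemma is_mat_scale: "operator_space sc nrm \<Longrightarrow> is_mat n m x \<Longrightarrow> is_mat n m (mat_scale sc c x)"
  unfolding is_mat_def mat_scale_def using sc_simps by metis
lemma is_mat_add: "is_mat n m (x::('v::ab_group_add) mat) \<Longrightarrow> is_mat n m y \<Longrightarrow> is_mat n m (\<lambda>i j. x i j + y i j)"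
  unfolding is_mat_def by auto
lemma is_mat_blk: "is_mat n n a \<Longrightarrow> is_mat n n b \<Longrightarrow> is_mat m m c \<Longrightarrow> is_mat n m b \<Longrightarrow>
  is_mat (n+m) (n+m) (blk n m a b c)"
  unfolding is_mat_def blk_def by auto

lemma nrm_sym: assumes "operator_space sc nrm" "n \<ge> 1" "is_mat n n x" "is_mat n n y"
  shows "nrm n (mat_diff x y) = nrm n (mat_diff y x)"
proof -
  have "mat_diff x y = mat_scale sc (-1) (mat_diff y x)"
    by (auto simp: mat_diff_def mat_scale_def sc_simps[OF assms(1)])
  then show ?thesis using nrm_scale[OF assms(1,2) is_mat_diff[OF assms(4,3)], of "-1"] by simp
qed

lemma nrm_tri3: assumes "operator_space sc nrm" "n \<ge> 1" "is_mat n n x" "is_mat n n y" "is_mat n n z"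
  shows "nrm n (mat_diff x z) \<le> nrm n (mat_diff x y) + nrm n (mat_diff y z)"
proof -
  have "mat_diff x z = (\<lambda>i j. mat_diff x y i j + mat_diff y z i j)"
    by (auto simp: mat_diff_def)
  then show ?thesis using nrm_tri[OF assms(1,2) is_mat_diff[OF assms(3,4)] is_mat_diff[OF assms(4,5)]] by simp
qed

lemma cmat_le1:
  assumes "\<And>\<xi>. (\<Sum>i<m. (cmod (\<Sum>k<n. \<alpha> i k * \<xi> k))\<^sup>2) \<le> (\<Sum>k<n. (cmod (\<xi> k))\<^sup>2)"
  shows "0 \<le> cmat_norm m n \<alpha> \<and> cmat_norm m n \<alpha> \<le> 1"
proof -
  let ?X = "{sqrt (\<Sum>i<m. (cmod (\<Sum>k<n. \<alpha> i k * \<xi> k))\<^sup>2) | \<xi>. (\<Sum>k<n. (cmod (\<xi> k))\<^sup>2) \<le> 1}"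
  have z: "0 \<in> ?X"
    by (rule CollectI, rule exI[of _ "\<lambda>_. 0"]) simp
  have ub: "\<forall>x\<in>?X. x \<le> 1"
  proof
    fix x assume "x \<in> ?X"
    then obtain \<xi> where x: "x = sqrt (\<Sum>i<m. (cmod (\<Sum>k<n. \<alpha> i k * \<xi> k))\<^sup>2)"
      and h: "(\<Sum>k<n. (cmod (\<xi> k))\<^sup>2) \<le> 1" by blast
    have "x \<le> sqrt (\<Sum>k<n. (cmod (\<xi> k))\<^sup>2)" unfolding x using assms by simp
    also have "\<dots> \<le> 1" using h by simp
    finally show "x \<le> 1" .
  qed
  have bdd: "bdd_above ?X" using ub by (auto simp: bdd_above_def)
  show ?thesis unfolding cmat_norm_def
    using cSup_upper[OF z bdd] cSup_least[of ?X 1] z ub by blast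
qed



lemma sum_split_add: "(\<Sum>i<n+m. f i) = (\<Sum>i<n. f i) + (\<Sum>i<m. f (i + n)) "
  for f :: "nat \<Rightarrow> 'a::comm_monoid_add"
  by (induction m) (simp_all add: ac_simps)

lemma ifmul: "(if P then 1 else 0) * (x::complex) = (if P then x else 0)" by simp

definition E :: "nat \<Rightarrow> complex mat" where "E n = (\<lambda>i k. if i = k \<and> k < n then 1 else 0)"
definition B1 :: "nat \<Rightarrow> complex mat" where "B1 n = (\<lambda>l j. if j = l + n \<and> l < n then 1 else 0)"
definition B2 :: "nat \<Rightarrow> complex mat" where "B2 n = (\<lambda>l j. if l = j + n \<and> j < n then 1 else 0)"

lemma cE1: "0 \<le> cmat_norm (n+n) n (E n) \<and> cmat_norm (n+n) n (E n) \<le> 1"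
proof (rule cmat_le1)
  fix \<xi> :: "nat \<Rightarrow> complex"
  have "(\<Sum>k<n. E n i k * \<xi> k) = (if i < n then \<xi> i else 0)" for i
    by (simp add: E_def ifmul sum.If_cases)
  then show "(\<Sum>i<n+n. (cmod (\<Sum>k<n. E n i k * \<xi> k))\<^sup>2) \<le> (\<Sum>k<n. (cmod (\<xi> k))\<^sup>2)"
    by (simp add: sum_split_add)
qed

lemma cE2: "0 \<le> cmat_norm n (n+n) (E n) \<and> cmat_norm n (n+n) (E n) \<le> 1"
proof (rule cmat_le1)
  fix \<xi> :: "nat \<Rightarrow> complex"
  have "(\<Sum>k<n+n. E n i k * \<xi> k) = (if i < n then \<xi> i else 0)" for i
  proof -
    have "{..<n + n} \<inter> {k. i = k \<and> k < n} = (if i<n then {i} else {})" by auto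
    then show ?thesis by (simp add: E_def ifmul sum.If_cases)
  qed
  then show "(\<Sum>i<n. (cmod (\<Sum>k<n+n. E n i k * \<xi> k))\<^sup>2) \<le> (\<Sum>k<n+n. (cmod (\<xi> k))\<^sup>2)"
    by (simp add: sum_split_add sum_nonneg)
qed

lemma cB1: "0 \<le> cmat_norm n (n+n) (B1 n) \<and> cmat_norm n (n+n) (B1 n) \<le> 1"
proof (rule cmat_le1)
  fix \<xi> :: "nat \<Rightarrow> complex"
  have "(\<Sum>k<n+n. B1 n i k * \<xi> k) = (if i < n then \<xi> (i+n) else 0)" for i
    by (simp add: B1_def ifmul sum.If_cases)
  then show "(\<Sum>i<n. (cmod (\<Sum>k<n+n. B1 n i k * \<xi> k))\<^sup>2) \<le> (\<Sum>k<n+n. (cmod (\<xi> k))\<^sup>2)"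
    by (simp add: sum_split_add sum_nonneg)
qed

lemma cB2: "0 \<le> cmat_norm (n+n) n (B2 n) \<and> cmat_norm (n+n) n (B2 n) \<le> 1"
proof (rule cmat_le1)
  fix \<xi> :: "nat \<Rightarrow> complex"
  have "(\<Sum>k<n. B2 n (i+n) k * \<xi> k) = (if i < n then \<xi> i else 0)" for i
    by (simp add: B2_def ifmul sum.If_cases)
  moreover have "(\<Sum>k<n. B2 n i k * \<xi> k) = 0" if "i < n" for i
    using that by (simp add: B2_def)
  ultimately show "(\<Sum>i<n+n. (cmod (\<Sum>k<n. B2 n i k * \<xi> k))\<^sup>2) \<le> (\<Sum>k<n. (cmod (\<xi> k))\<^sup>2)"
    by (simp add: sum_split_add)
qed



lemma sw1:
  assumes os: "operator_space sc nrm" and X: "is_mat n n X"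
  shows "mat_sandwich sc (n+n) n (E n) X (B1 n) = blk n n (\<lambda>_ _. 0) X (\<lambda>_ _. 0)"
proof (intro ext)
  fix i j
  have h: "sc (E n i k * B1 n l j) (X k l) = (if k = i \<and> i < n \<and> n \<le> j then (if l = j - n then X k l else 0) else 0)"
    if "l < n" "k < n" for k l
    using that by (auto simp: E_def B1_def sc_simps[OF os])
  have "(\<Sum>k<n. \<Sum>l<n. sc (E n i k * B1 n l j) (X k l))
      = (\<Sum>k<n. if k = i \<and> i < n \<and> n \<le> j then (if j - n < n then X k (j - n) else 0) else 0)"
  proof (rule sum.cong[OF refl])
    fix k assume "k \<in> {..<n}"
    then have k: "k < n" by simp
    have "(\<Sum>l<n. sc (E n i k * B1 n l j) (X k l)) = (\<Sum>l<n. if k = i \<and> i < n \<and> n \<le> j then (if l = j - n then X k l else 0) else 0)"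
      by (rule sum.cong) (simp_all add: h k)
    then show "(\<Sum>l<n. sc (E n i k * B1 n l j) (X k l)) = (if k = i \<and> i < n \<and> n \<le> j then (if j - n < n then X k (j - n) else 0) else 0)"
      by auto
  qed
  also have "\<dots> = (if i < n \<and> n \<le> j \<and> j - n < n then X i (j - n) else 0)"
    by (auto simp: sum.If_cases)
  finally have s: "(\<Sum>k<n. \<Sum>l<n. sc (E n i k * B1 n l j) (X k l)) = (if i < n \<and> n \<le> j \<and> j - n < n then X i (j - n) else 0)" .
  show "mat_sandwich sc (n+n) n (E n) X (B1 n) i j = blk n n (\<lambda>_ _. 0) X (\<lambda>_ _. 0) i j"
    unfolding mat_sandwich_def s blk_def using X by (auto simp: is_mat_def)
qed

lemma sw2:
  assumes os: "operator_space sc nrm" and X: "is_mat n n X"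
  shows "mat_sandwich sc n (n+n) (E n) (blk n n x X y) (B2 n) = X"
proof (intro ext)
  fix i j
  let ?Z = "blk n n x X y"
  have h: "sc (E n i k * B2 n l j) (?Z k l) = (if k = i \<and> i < n \<and> j < n then (if l = j + n then ?Z k l else 0) else 0)"
    if "l < n+n" "k < n+n" for k l
    using that by (auto simp: E_def B2_def sc_simps[OF os])
  have "(\<Sum>k<n+n. \<Sum>l<n+n. sc (E n i k * B2 n l j) (?Z k l))
      = (\<Sum>k<n+n. if k = i \<and> i < n \<and> j < n then ?Z k (j + n) else 0)"
  proof (rule sum.cong[OF refl])
    fix k assume "k \<in> {..<n+n}"
    then have k: "k < n+n" by simp
    have "(\<Sum>l<n+n. sc (E n i k * B2 n l j) (?Z k l)) = (\<Sum>l<n+n. if k = i \<and> i < n \<and> j < n then (if l = j + n then ?Z k l else 0) else 0)"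
      by (rule sum.cong) (simp_all add: h k)
    then show "(\<Sum>l<n+n. sc (E n i k * B2 n l j) (?Z k l)) = (if k = i \<and> i < n \<and> j < n then ?Z k (j + n) else 0)"
      by auto
  qed
  also have "\<dots> = (if i < n \<and> j < n then ?Z i (j + n) else 0)"
    by (auto simp: sum.If_cases)
  finally have s: "(\<Sum>k<n+n. \<Sum>l<n+n. sc (E n i k * B2 n l j) (?Z k l)) = (if i < n \<and> j < n then X i j else 0)"
    by (simp add: blk_def)
  show "mat_sandwich sc n (n+n) (E n) ?Z (B2 n) i j = X i j"
    unfolding mat_sandwich_def s using X by (auto simp: is_mat_def)
qed



lemma is_mat_E1: "is_mat (n+n) n (E n)" and is_mat_E2: "is_mat n (n+n) (E n)"
  and is_mat_B1: "is_mat n (n+n) (B1 n)" and is_mat_B2: "is_mat (n+n) n (B2 n)"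
  by (auto simp: is_mat_def E_def B1_def B2_def)

lemma ur_le:
  assumes os: "operator_space sc nrm" and n: "n \<ge> 1" and X: "is_mat n n X"
  shows "nrm (n+n) (blk n n (\<lambda>_ _. 0) X (\<lambda>_ _. 0)) \<le> nrm n X"
proof -
  have "nrm (n+n) (mat_sandwich sc (n+n) n (E n) X (B1 n)) \<le> cmat_norm (n+n) n (E n) * nrm n X * cmat_norm n (n+n) (B1 n)"
    by (rule nrm_sandwich[OF os n _ is_mat_E1 X is_mat_B1]) (use n in simp)
  also have "\<dots> \<le> 1 * nrm n X * 1"
    using cE1[of n] cB1[of n] nrm_nonneg[OF os n X]
    by (intro mult_mono) (auto intro: mult_le_one mult_nonneg_nonneg simp: mult_left_le_one_le)
  finally show ?thesis using sw1[OF os X] by simp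
qed

lemma ur_ge:
  assumes os: "operator_space sc nrm" and n: "n \<ge> 1" and X: "is_mat n n X"
    and x: "is_mat n n x" and y: "is_mat n n y"
  shows "nrm n X \<le> nrm (n+n) (blk n n x X y)"
proof -
  have Z: "is_mat (n+n) (n+n) (blk n n x X y)" using is_mat_blk[OF x X y X] .
  have "nrm n (mat_sandwich sc n (n+n) (E n) (blk n n x X y) (B2 n)) \<le> cmat_norm n (n+n) (E n) * nrm (n+n) (blk n n x X y) * cmat_norm (n+n) n (B2 n)"
    by (rule nrm_sandwich[OF os _ n is_mat_E2 Z is_mat_B2]) (use n in simp)
  also have "\<dots> \<le> 1 * nrm (n+n) (blk n n x X y) * 1"
    using cE2[of n] cB2[of n] nrm_nonneg[OF os _ Z] n
    by (intro mult_mono) (auto intro: mult_le_one mult_nonneg_nonneg simp: mult_left_le_one_le)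
  finally show ?thesis using sw2[OF os X] by simp
qed



lemma nc_dom_mat: "nc_domain nrm D \<Longrightarrow> x \<in> D n \<Longrightarrow> is_mat n n x"
  unfolding nc_domain_def by blast
lemma nc_dom_dsum: "nc_domain nrm D \<Longrightarrow> n \<ge> 1 \<Longrightarrow> m \<ge> 1 \<Longrightarrow> a \<in> D n \<Longrightarrow> c \<in> D m \<Longrightarrow> dsum n m a c \<in> D (n+m)"
  unfolding nc_domain_def by blast
lemma nc_dom_open: "nc_domain nrm D \<Longrightarrow> n \<ge> 1 \<Longrightarrow> x \<in> D n \<Longrightarrow>
   \<exists>e>0. \<forall>y. is_mat n n y \<and> nrm n (mat_diff y x) < e \<longrightarrow> y \<in> D n"
  unfolding nc_domain_def by blast

lemma delta_lb:
  assumes os: "operator_space sc nrm" and dom: "nc_domain nrm D" and n: "n \<ge> 1"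
    and M: "M > 0" and bM: "\<forall>z\<in>D (n+n). nrm (n+n) z \<le> M"
    and x: "x \<in> D n" and y: "y \<in> D n"
  shows "ereal (nrm n (mat_diff x y) / M) \<le> nc_delta_tilde sc D n x y"
proof -
  define S where "S = {t::ereal. 0 \<le> t \<and>
      (\<forall>s::real. 0 \<le> s \<and> ereal s \<le> t \<longrightarrow>
          blk n n x (mat_scale sc (complex_of_real s) (mat_diff x y)) y \<in> D (n + n))}"
  have del: "nc_delta_tilde sc D n x y = inverse (Sup S)"
    unfolding nc_delta_tilde_def nc_delta_def S_def by simp
  have xm: "is_mat n n x" and ym: "is_mat n n y" using nc_dom_mat[OF dom] x y by auto
  have dm: "is_mat n n (mat_diff x y)" using is_mat_diff[OF xm ym] .
  define \<delta> where "\<delta> = nrm n (mat_diff x y)"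
  have d0: "0 \<le> \<delta>" unfolding \<delta>_def using nrm_nonneg[OF os n dm] .
  have "0 \<in> S"
  proof -
    have "mat_scale sc (complex_of_real 0) (mat_diff x y) = (\<lambda>_ _. 0)"
      by (auto simp: mat_scale_def sc_simps[OF os])
    then have "blk n n x (mat_scale sc (complex_of_real s) (mat_diff x y)) y \<in> D (n + n)" if "s = 0" for s
      using that nc_dom_dsum[OF dom n n x y] by (simp add: dsum_def)
    show ?thesis unfolding S_def
    proof (intro CollectI conjI allI impI)
      fix s :: real assume "0 \<le> s \<and> ereal s \<le> 0"
      then have "s = 0" by (simp add: zero_ereal_def)
      then show "blk n n x (mat_scale sc (complex_of_real s) (mat_diff x y)) y \<in> D (n + n)" by fact
    qed simp
  qed
  then have S0: "0 \<le> Sup S" by (rule Sup_upper2) simp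
  show ?thesis
  proof (cases "\<delta> = 0")
    case True
    then show ?thesis using S0 by (simp add: del \<delta>_def[symmetric] ereal_inverse_nonneg_iff zero_ereal_def[symmetric])
  next
    case False
    with d0 have dp: "\<delta> > 0" by simp
    have "t \<le> ereal (M / \<delta>)" if t: "t \<in> S" for t
    proof (rule ccontr)
      assume "\<not> t \<le> ereal (M / \<delta>)"
      then have "ereal (M / \<delta>) < t" by simp
      then obtain s where s1: "ereal (M / \<delta>) < ereal s" and s2: "ereal s < t" using ereal_dense2 by blast
      have sgt: "M / \<delta> < s" using s1 by simp
      have s0: "0 \<le> s" using sgt M dp by (smt (verit) divide_pos_pos)
      have inD: "blk n n x (mat_scale sc (complex_of_real s) (mat_diff x y)) y \<in> D (n + n)"
        using t s0 s2 unfolding S_def by auto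
      have "nrm n (mat_scale sc (complex_of_real s) (mat_diff x y)) \<le> M"
        using ur_ge[OF os n is_mat_scale[OF os dm, of "complex_of_real s"] xm ym] bM inD by (meson order_trans)
      moreover have "nrm n (mat_scale sc (complex_of_real s) (mat_diff x y)) = s * \<delta>"
        using nrm_scale[OF os n dm] s0 by (simp add: \<delta>_def)
      moreover have "M < s * \<delta>" using sgt dp by (simp add: field_simps)
      ultimately show False by simp
    qed
    then have "Sup S \<le> ereal (M / \<delta>)" by (rule Sup_least)
    then have "inverse (ereal (M / \<delta>)) \<le> inverse (Sup S)"
      by (rule ereal_inverse_antimono[OF S0])
    moreover have "inverse (ereal (M / \<delta>)) = ereal (\<delta> / M)" using M dp by simp
    ultimately show ?thesis by (simp add: del \<delta>_def)
  qed
qed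

lemma path_lb:
  fixes N :: nat and p :: "nat \<Rightarrow> 'v::ab_group_add mat"
  assumes os: "operator_space sc nrm" and dom: "nc_domain nrm D" and n: "n \<ge> 1"
    and M: "M > 0" and bM: "\<forall>z\<in>D (n+n). nrm (n+n) z \<le> M"
  shows "(\<forall>j\<le>N. p j \<in> D n) \<Longrightarrow> ereal (nrm n (mat_diff (p 0) (p N)) / M)
      \<le> (\<Sum>j\<in>{1..N}. nc_delta_tilde sc D n (p (j - 1)) (p j))"
proof (induction N)
  case 0
  have "mat_diff (p 0) (p 0) = (\<lambda>_ _. 0)" by (auto simp: mat_diff_def)
  then show ?case using nrm_0[OF os n] by simp
next
  case (Suc N)
  have pm: "is_mat n n (p j)" if "j \<le> Suc N" for j using Suc.prems that nc_dom_mat[OF dom] by blast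
  have IH: "ereal (nrm n (mat_diff (p 0) (p N)) / M) \<le> (\<Sum>j\<in>{1..N}. nc_delta_tilde sc D n (p (j - 1)) (p j))"
    using Suc by auto
  have st: "ereal (nrm n (mat_diff (p N) (p (Suc N))) / M) \<le> nc_delta_tilde sc D n (p N) (p (Suc N))"
    using delta_lb[OF os dom n M bM] Suc.prems by simp
  have "nrm n (mat_diff (p 0) (p (Suc N))) \<le> nrm n (mat_diff (p 0) (p N)) + nrm n (mat_diff (p N) (p (Suc N)))"
    by (rule nrm_tri3[OF os n]) (use pm in auto)
  then have "nrm n (mat_diff (p 0) (p (Suc N))) / M \<le> nrm n (mat_diff (p 0) (p N)) / M + nrm n (mat_diff (p N) (p (Suc N))) / M"
    using M by (simp add: add_divide_distrib[symmetric] divide_right_mono)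
  then have "ereal (nrm n (mat_diff (p 0) (p (Suc N))) / M) \<le> ereal (nrm n (mat_diff (p 0) (p N)) / M) + ereal (nrm n (mat_diff (p N) (p (Suc N))) / M)"
    by simp
  also have "\<dots> \<le> (\<Sum>j\<in>{1..N}. nc_delta_tilde sc D n (p (j - 1)) (p j)) + nc_delta_tilde sc D n (p N) (p (Suc N))"
    by (rule add_mono[OF IH st])
  also have "\<dots> = (\<Sum>j\<in>{1..Suc N}. nc_delta_tilde sc D n (p (j - 1)) (p j))"
    by (simp add: sum.cl_ivl_Suc)
  finally show ?case .
qed

lemma dist_lb:
  fixes sc :: "complex \<Rightarrow> 'v::ab_group_add \<Rightarrow> 'v"
  assumes os: "operator_space sc nrm" and dom: "nc_domain nrm D" and n: "n \<ge> 1"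
    and M: "M > 0" and bM: "\<forall>z\<in>D (n+n). nrm (n+n) z \<le> M"
  shows "ereal (nrm n (mat_diff a c) / M) \<le> nc_dist_tilde sc D n a c"
  unfolding nc_dist_tilde_def
proof (rule Inf_greatest)
  fix u assume "u \<in> {(\<Sum>j\<in>{1..N}. nc_delta_tilde sc D n (p (j - 1)) (p j)) | (N::nat) p.
      p 0 = a \<and> p N = c \<and> (\<forall>j\<le>N. p j \<in> D n)}"
  then obtain N :: nat and p :: "nat \<Rightarrow> 'v mat" where u: "u = (\<Sum>j\<in>{1..N}. nc_delta_tilde sc D n (p (j - 1)) (p j))"
    and h: "p 0 = a" "p N = c" "\<forall>j\<le>N. p j \<in> D n" by blast
  show "ereal (nrm n (mat_diff a c) / M) \<le> u"
    using path_lb[OF os dom n M bM h(3)] h u by simp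
qed



lemma near:
  fixes sc :: "complex \<Rightarrow> 'v::ab_group_add \<Rightarrow> 'v"
  assumes os: "operator_space sc nrm" and dom: "nc_domain nrm D" and n: "n \<ge> 1"
    and a: "a \<in> D n" and e: "e > 0"
  shows "\<exists>e'>0. \<forall>b\<in>D n. nrm n (mat_diff b a) < e' \<longrightarrow> nc_dist_tilde sc D n a b < ereal e"
proof -
  have nn: "n + n \<ge> 1" using n by simp
  obtain \<epsilon> where ep: "\<epsilon> > 0" and opn: "\<And>y. is_mat (n+n) (n+n) y \<Longrightarrow> nrm (n+n) (mat_diff y (dsum n n a a)) < \<epsilon> \<Longrightarrow> y \<in> D (n+n)"
    using nc_dom_open[OF dom nn nc_dom_dsum[OF dom n n a a]] by blast
  define T where "T = 2 / e"
  have T: "T > 0" using e by (simp add: T_def)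
  have am: "is_mat n n a" using nc_dom_mat[OF dom a] .
  have z: "is_mat n n (\<lambda>_ _. 0::'v)" by (simp add: is_mat_def)
  show ?thesis
  proof (intro exI[of _ "\<epsilon> / (T + 1)"] conjI ballI impI)
    show "\<epsilon> / (T + 1) > 0" using ep T by simp
    fix b assume b: "b \<in> D n" and nb: "nrm n (mat_diff b a) < \<epsilon> / (T + 1)"
    have bm: "is_mat n n b" using nc_dom_mat[OF dom b] .
    define \<delta> where "\<delta> = nrm n (mat_diff b a)"
    have d0: "0 \<le> \<delta>" unfolding \<delta>_def using nrm_nonneg[OF os n is_mat_diff[OF bm am]] .
    have dT: "(T + 1) * \<delta> < \<epsilon>" using nb T by (simp add: \<delta>_def field_simps)
    define S where "S = {t::ereal. 0 \<le> t \<and>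
      (\<forall>s::real. 0 \<le> s \<and> ereal s \<le> t \<longrightarrow>
          blk n n a (mat_scale sc (complex_of_real s) (mat_diff a b)) b \<in> D (n + n))}"
    have del: "nc_delta_tilde sc D n a b = inverse (Sup S)"
      unfolding nc_delta_tilde_def nc_delta_def S_def by simp
    have "ereal T \<in> S" unfolding S_def
    proof (intro CollectI conjI allI impI)
      show "0 \<le> ereal T" using T by simp
      fix s :: real assume "0 \<le> s \<and> ereal s \<le> ereal T"
      then have s0: "0 \<le> s" and sT: "s \<le> T" by auto
      let ?X = "mat_scale sc (complex_of_real s) (mat_diff a b)"
      let ?y = "blk n n a ?X b"
      have Xm: "is_mat n n ?X" using is_mat_scale[OF os is_mat_diff[OF am bm]] .
      have Ym: "is_mat n n (mat_diff b a)" using is_mat_diff[OF bm am] .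
      have ym: "is_mat (n+n) (n+n) ?y" using is_mat_blk[OF am Xm bm Xm] .
      have eq: "mat_diff ?y (dsum n n a a) = (\<lambda>i j. blk n n (\<lambda>_ _. 0) ?X (\<lambda>_ _. 0) i j + dsum n n (\<lambda>_ _. 0) (mat_diff b a) i j)"
        by (intro ext) (auto simp: mat_diff_def blk_def dsum_def)
      have "nrm (n+n) (mat_diff ?y (dsum n n a a)) \<le> nrm (n+n) (blk n n (\<lambda>_ _. 0) ?X (\<lambda>_ _. 0)) + nrm (n+n) (dsum n n (\<lambda>_ _. 0) (mat_diff b a))"
        unfolding eq
        by (rule nrm_tri[OF os nn]) (auto intro: is_mat_blk z Xm Ym simp: dsum_def)
      also have "\<dots> \<le> nrm n ?X + max (nrm n (\<lambda>_ _. 0)) (nrm n (mat_diff b a))"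
        using ur_le[OF os n Xm] nrm_dsum[OF os n n z Ym] by simp
      also have "\<dots> = s * \<delta> + \<delta>"
        using nrm_scale[OF os n is_mat_diff[OF am bm], of "complex_of_real s"] s0 d0
          nrm_0[OF os n] nrm_sym[OF os n am bm]
        by (simp add: \<delta>_def)
      also have "\<dots> \<le> (T + 1) * \<delta>" using mult_right_mono[OF sT d0] by (simp add: algebra_simps)
      also have "\<dots> < \<epsilon>" by (rule dT)
      finally show "?y \<in> D (n + n)" by (rule opn[OF ym])
    qed
    then have "ereal T \<le> Sup S" by (rule Sup_upper)
    then have "inverse (Sup S) \<le> inverse (ereal T)"
      by (rule ereal_inverse_antimono[rotated]) (use T in simp)
    also have "inverse (ereal T) = ereal (e / 2)" using T e by (simp add: T_def)
    also have "\<dots> < ereal e" using e by simp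
    finally have dl: "nc_delta_tilde sc D n a b < ereal e" by (simp add: del)
    let ?p = "\<lambda>j::nat. if j = 0 then a else b"
    have "nc_dist_tilde sc D n a b \<le> (\<Sum>j\<in>{1..1}. nc_delta_tilde sc D n (?p (j - 1)) (?p j))"
      unfolding nc_dist_tilde_def
      by (rule Inf_lower) (rule CollectI, rule exI[of _ 1], rule exI[of _ ?p], use a b in auto)
    also have "\<dots> = nc_delta_tilde sc D n a b" by simp
    finally show "nc_dist_tilde sc D n a b < ereal e" using dl by simp
  qed
qed


theorem proposition5p5:
  fixes sc :: "complex \<Rightarrow> 'v::ab_group_add \<Rightarrow> 'v"
    and nrm :: "nat \<Rightarrow> 'v mat \<Rightarrow> real"
    and D :: "nat \<Rightarrow> 'v mat set"
    and n :: nat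
    and A :: "'v mat set"
  assumes "operator_space sc nrm"
    and "nc_domain nrm D"
    and "bounded_nc nrm D"
    and "n \<ge> 1"
    and "A \<subseteq> D n"
    and "\<exists>r>0. \<forall>a\<in>A. \<forall>y. is_mat n n y \<and> y \<notin> D n \<longrightarrow> r \<le> nrm n (mat_diff y a)"
  shows "\<forall>U. dist_open A (nc_dist_tilde sc D n) U
             \<longleftrightarrow> dist_open A (\<lambda>a b. ereal (nrm n (mat_diff b a))) U"
proof -
  note os = assms(1) and dom = assms(2) and n = assms(4) and AD = assms(5)
  obtain M0 where M0: "\<forall>k\<ge>1. \<forall>x\<in>D k. nrm k x \<le> M0" using assms(3) unfolding bounded_nc_def by blast
  define M where "M = max M0 1"
  have M: "M > 0" by (simp add: M_def)
  have bM: "\<forall>z\<in>D (n+n). nrm (n+n) z \<le> M"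
  proof
    fix z assume "z \<in> D (n+n)"
    then have "nrm (n+n) z \<le> M0" using M0 n by simp
    then show "nrm (n+n) z \<le> M" unfolding M_def by simp
  qed
  show ?thesis
  proof (intro allI iffI)
    fix U assume U: "dist_open A (nc_dist_tilde sc D n) U"
    show "dist_open A (\<lambda>a b. ereal (nrm n (mat_diff b a))) U"
      unfolding dist_open_def
    proof (intro conjI ballI)
      show "U \<subseteq> A" using U by (simp add: dist_open_def)
      fix a assume aU: "a \<in> U"
      then obtain e where e: "e > 0" and he: "\<forall>b\<in>A. nc_dist_tilde sc D n a b < ereal e \<longrightarrow> b \<in> U"
        using U unfolding dist_open_def by blast
      have aD: "a \<in> D n" using aU U AD unfolding dist_open_def by blast
      obtain e' where e': "e' > 0" and he': "\<forall>b\<in>D n. nrm n (mat_diff b a) < e' \<longrightarrow> nc_dist_tilde sc D n a b < ereal e"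
        using near[OF os dom n aD e] by blast
      show "\<exists>e>0. \<forall>b\<in>A. ereal (nrm n (mat_diff b a)) < ereal e \<longrightarrow> b \<in> U"
        using e' he' he AD by (intro exI[of _ e']) auto
    qed
  next
    fix U assume U: "dist_open A (\<lambda>a b. ereal (nrm n (mat_diff b a))) U"
    show "dist_open A (nc_dist_tilde sc D n) U"
      unfolding dist_open_def
    proof (intro conjI ballI)
      show "U \<subseteq> A" using U by (simp add: dist_open_def)
      fix a assume aU: "a \<in> U"
      then obtain e where e: "e > 0" and he: "\<forall>b\<in>A. ereal (nrm n (mat_diff b a)) < ereal e \<longrightarrow> b \<in> U"
        using U unfolding dist_open_def by blast
      have aD: "a \<in> D n" using aU U AD unfolding dist_open_def by blast
      show "\<exists>e>0. \<forall>b\<in>A. nc_dist_tilde sc D n a b < ereal e \<longrightarrow> b \<in> U"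
      proof (intro exI[of _ "e / M"] conjI ballI impI)
        show "e / M > 0" using e M by simp
        fix b assume bA: "b \<in> A" and db: "nc_dist_tilde sc D n a b < ereal (e / M)"
        have bD: "b \<in> D n" using bA AD by blast
        have "ereal (nrm n (mat_diff a b) / M) < ereal (e / M)"
          using dist_lb[OF os dom n M bM, of a b] db by (rule le_less_trans)
        then have "nrm n (mat_diff a b) < e" using M by (simp add: divide_less_cancel)
        then have "nrm n (mat_diff b a) < e"
          using nrm_sym[OF os n nc_dom_mat[OF dom aD] nc_dom_mat[OF dom bD]] by simp
        then show "b \<in> U" using he bA by simp
      qed
    qed
  qed
qed

end
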